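(* For any networked common goods game in which the utility function $U_j$ of every agent $a_j$ is increasing, concave and differentiable, a pure strategy Nash equilibrium exists.
   Context: A networked common goods game (NCGG) is given by a finite bipartite graph $G=(P,A,E)$ with goods $P=\{p_1,\dots,p_n\}$ and agents $A=\{a_1,\dots,a_m\}$ (an edge $(p_i,a_j)\in E$ means agent $a_j$ is entitled to good $p_i$), ground levels $\alpha_i\ge 0$ for each good $p_i$, and for each agent $a_j$ a utility function $U_j:[0,\infty)\to\mathbb{R}$ with $U_j(0)=0$. $N(v)$ denotes the set of neighbours of a vertex $v$. Each agent owns one unit of a divisible resource; a strategy of $a_j$ is a vector $(x_{ij})_{p_i\in N(a_j)}$ with $x_{ij}\ge 0$ and $\sum_{p_i\in N(a_j)}x_{ij}\le 1$. For a strategy profile, the total resource of good $p_i$ is $W_i=\alpha_i+\sum_{a_k\in N(p_i)}x_{ik}$, and the payoff of $a_j$ is $\sum_{p_i\in N(a_j)}U_j(W_i)$. A pure strategy Nash equilibrium is a profile in which no agent can strictly increase her payoff by unilaterally changing her strategy. *)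

theory Defs
  imports "HOL-Analysis.Analysis"
begin

text \<open>A networked common goods game: goods of type 'p, agents of type 'a,
  the bipartite graph is given by finite sets P, A and an edge set E \<subseteq> P \<times> A.
  A strategy profile is x :: 'p \<Rightarrow> 'a \<Rightarrow> real, where x i j is the amount agent j
  invests in good i (only values on edges matter).\<close>

definition ncgg :: "'p set \<Rightarrow> 'a set \<Rightarrow> ('p \<times> 'a) set \<Rightarrow> ('p \<Rightarrow> real) \<Rightarrow> ('a \<Rightarrow> real \<Rightarrow> real) \<Rightarrow> bool" where
  "ncgg P A E \<alpha> U \<longleftrightarrow> finite P \<and> finite A \<and> E \<subseteq> P \<times> A
     \<and> (\<forall>i\<in>P. \<alpha> i \<ge> 0) \<and> (\<forall>j\<in>A. U j 0 = 0)"

definition goods_of :: "('p \<times> 'a) set \<Rightarrow> 'a \<Rightarrow> 'p set" where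
  "goods_of E j = {i. (i, j) \<in> E}"

definition agents_of :: "('p \<times> 'a) set \<Rightarrow> 'p \<Rightarrow> 'a set" where
  "agents_of E i = {j. (i, j) \<in> E}"

definition is_strategy :: "('p \<times> 'a) set \<Rightarrow> 'a \<Rightarrow> ('p \<Rightarrow> real) \<Rightarrow> bool" where
  "is_strategy E j s \<longleftrightarrow> (\<forall>i\<in>goods_of E j. s i \<ge> 0) \<and> (\<Sum>i\<in>goods_of E j. s i) \<le> 1"

definition is_profile :: "'a set \<Rightarrow> ('p \<times> 'a) set \<Rightarrow> ('p \<Rightarrow> 'a \<Rightarrow> real) \<Rightarrow> bool" where
  "is_profile A E x \<longleftrightarrow> (\<forall>j\<in>A. is_strategy E j (\<lambda>i. x i j))"

definition total_resource :: "('p \<times> 'a) set \<Rightarrow> ('p \<Rightarrow> real) \<Rightarrow> ('p \<Rightarrow> 'a \<Rightarrow> real) \<Rightarrow> 'p \<Rightarrow> real" where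
  "total_resource E \<alpha> x i = \<alpha> i + (\<Sum>k\<in>agents_of E i. x i k)"

definition payoff :: "('p \<times> 'a) set \<Rightarrow> ('p \<Rightarrow> real) \<Rightarrow> ('a \<Rightarrow> real \<Rightarrow> real) \<Rightarrow> ('p \<Rightarrow> 'a \<Rightarrow> real) \<Rightarrow> 'a \<Rightarrow> real" where
  "payoff E \<alpha> U x j = (\<Sum>i\<in>goods_of E j. U j (total_resource E \<alpha> x i))"

definition deviate :: "('p \<Rightarrow> 'a \<Rightarrow> real) \<Rightarrow> 'a \<Rightarrow> ('p \<Rightarrow> real) \<Rightarrow> ('p \<Rightarrow> 'a \<Rightarrow> real)" where
  "deviate x j s = (\<lambda>i k. if k = j then s i else x i k)"

definition pure_nash :: "'a set \<Rightarrow> ('p \<times> 'a) set \<Rightarrow> ('p \<Rightarrow> real) \<Rightarrow> ('a \<Rightarrow> real \<Rightarrow> real) \<Rightarrow> ('p \<Rightarrow> 'a \<Rightarrow> real) \<Rightarrow> bool" where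
  "pure_nash A E \<alpha> U x \<longleftrightarrow> is_profile A E x \<and>
     (\<forall>j\<in>A. \<forall>s. is_strategy E j s \<longrightarrow> \<not> (payoff E \<alpha> U (deviate x j s) j > payoff E \<alpha> U x j))"

end

theory Submission
  imports Defs
begin

lemma swap_div: "((p::real) - q)/(r - s) = (q - p)/(s - r)"
  by (metis minus_diff_eq minus_divide_divide)

lemma concave_chord:
  fixes f :: "real \<Rightarrow> real"
  assumes f: "concave_on {0..} f" and "0 \<le> a" "a < b" "b \<le> c" "c < d"
  shows "(f d - f c) / (d - c) \<le> (f b - f a) / (b - a)"
proof -
  have g: "convex_on {0..} (\<lambda>x. -(f x))" using f by (simp add: concave_on_def)
  have e: "((-(f x)) - (-(f y))) / (x - y) = - ((f y - f x) / (y - x))" for x y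
  proof -
    have 1: "(-(f x)) - (-(f y)) = f y - f x" by linarith
    have 2: "x - y = -(y-x)" by linarith
    show ?thesis unfolding 1 2 by (simp only: divide_minus_right)
  qed
  show ?thesis
  proof (cases "b = c")
    case True
    have 1: "((-(f a)) - (-(f b))) / (a - b) \<le> ((-(f a)) - (-(f d))) / (a - d)"
      using convex_on_slope_le(1)[OF g, of a d b] assms True by auto
    have 2: "((-(f a)) - (-(f d))) / (a - d) \<le> ((-(f b)) - (-(f d))) / (b - d)"
      using convex_on_slope_le(2)[OF g, of a d b] assms True by auto
    have "(f d - f b) / (d - b) \<le> (f b - f a) / (b - a)" using 1 2 e[of a b] e[of b d] by linarith
    then show ?thesis using True by simp
  next
    case False
    have 1: "((-(f a)) - (-(f b))) / (a - b) \<le> ((-(f b)) - (-(f c))) / (b - c)"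
      using convex_on_slope_le(1)[OF g, of a c b] convex_on_slope_le(2)[OF g, of a c b] assms False by auto
    have 2: "((-(f b)) - (-(f c))) / (b - c) \<le> ((-(f c)) - (-(f d))) / (c - d)"
      using convex_on_slope_le(1)[OF g, of b d c] convex_on_slope_le(2)[OF g, of b d c] assms False by auto
    show ?thesis using 1 2 e[of a b] e[of b c] e[of c d] by linarith
  qed
qed

lemma tr_dev:
  assumes "finite (agents_of E i)" "(i,j) \<in> E"
  shows "total_resource E \<alpha> (deviate X j s) i = total_resource E \<alpha> X i - X i j + s i"
proof -
  have j: "j \<in> agents_of E i" using assms by (simp add: agents_of_def)
  have a: "(\<Sum>k\<in>agents_of E i. deviate X j s i k) = deviate X j s i j + (\<Sum>k\<in>agents_of E i - {j}. deviate X j s i k)"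
    by (rule sum.remove[OF assms(1) j])
  have b: "(\<Sum>k\<in>agents_of E i - {j}. deviate X j s i k) = (\<Sum>k\<in>agents_of E i - {j}. X i k)"
    by (rule sum.cong) (auto simp: deviate_def)
  have c: "(\<Sum>k\<in>agents_of E i. X i k) = X i j + (\<Sum>k\<in>agents_of E i - {j}. X i k)"
    by (rule sum.remove[OF assms(1) j])
  show ?thesis using a b c by (simp add: total_resource_def deviate_def)
qed

lemma tr_nonneg:
  assumes "\<alpha> i \<ge> 0" "\<forall>k\<in>agents_of E i. Y i k \<ge> 0"
  shows "total_resource E \<alpha> Y i \<ge> 0"
  using assms unfolding total_resource_def by (simp add: sum_nonneg)

lemma nash_suff:
  assumes ncgg: "ncgg P A E \<alpha> U"
    and smono: "\<forall>j\<in>A. strict_mono_on {0..} (U j)"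
    and conc: "\<forall>j\<in>A. concave_on {0..} (U j)"
    and prof: "is_profile A E X"
    and full: "\<forall>j\<in>A. goods_of E j \<noteq> {} \<longrightarrow> (\<Sum>i\<in>goods_of E j. X i j) = 1"
    and lev: "\<forall>j\<in>A. \<forall>i\<in>goods_of E j. \<forall>i'\<in>goods_of E j. X i j > 0 \<longrightarrow>
                total_resource E \<alpha> X i \<le> total_resource E \<alpha> X i'"
  shows "pure_nash A E \<alpha> U X"
  unfolding pure_nash_def
proof (intro conjI prof ballI allI impI)
  fix j s
  assume jA: "j \<in> A" and st: "is_strategy E j s"
  define G where "G = goods_of E j"
  define W where "W = total_resource E \<alpha> X"
  define W' where "W' = total_resource E \<alpha> (deviate X j s)"
  define u where "u = U j"
  define d where "d i = s i - X i j" for i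
  have finP: "finite P" and EPA: "E \<subseteq> P \<times> A" and alpha: "\<forall>i\<in>P. \<alpha> i \<ge> 0"
    using ncgg by (auto simp: ncgg_def)
  have finA: "finite A" using ncgg by (simp add: ncgg_def)
  have finG: "finite G" unfolding G_def goods_of_def
    by (rule finite_subset[OF _ finP]) (use EPA in auto)
  have uconc: "concave_on {0..} u" using conc jA by (simp add: u_def)
  have umono: "u a \<le> u b" if "0 \<le> a" "a \<le> b" for a b
  proof (cases "a = b")
    case False
    then have "a < b" using that by simp
    then show ?thesis using smono jA that strict_mono_onD[of "{0..}" u a b]
      by (auto simp: u_def)
  qed simp
  have Xnn: "X i k \<ge> 0" if "(i,k) \<in> E" for i k
  proof -
    have "k \<in> A" using that EPA by auto
    then show ?thesis using prof that
      by (auto simp: is_profile_def is_strategy_def goods_of_def)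
  qed
  have snn: "s i \<ge> 0" if "i \<in> G" for i
    using st that by (simp add: is_strategy_def G_def)
  have ssum: "(\<Sum>i\<in>G. s i) \<le> 1" using st by (simp add: is_strategy_def G_def)
  have EG: "(i, j) \<in> E" if "i \<in> G" for i using that by (simp add: G_def goods_of_def)
  have finag: "finite (agents_of E i)" for i
    unfolding agents_of_def
    by (rule finite_subset[OF _ finA]) (use EPA in auto)
  have W'eq: "W' i = W i + d i" if "i \<in> G" for i
    using tr_dev[OF finag EG[OF that]] by (simp add: W'_def W_def d_def)
  have W'nn: "W' i \<ge> 0" if "i \<in> G" for i
  proof -
    have iP: "i \<in> P" using EG[OF that] EPA by auto
    show ?thesis unfolding W'_def
    proof (rule tr_nonneg)
      show "\<alpha> i \<ge> 0" using alpha iP by simp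
      show "\<forall>k\<in>agents_of E i. deviate X j s i k \<ge> 0"
        using snn[OF that] Xnn by (auto simp: deviate_def agents_of_def)
    qed
  qed
  have Wnn: "W i \<ge> 0" if "i \<in> G" for i
  proof -
    have iP: "i \<in> P" using EG[OF that] EPA by auto
    show ?thesis unfolding W_def
      by (rule tr_nonneg) (use alpha iP Xnn in \<open>auto simp: agents_of_def\<close>)
  qed
  have payX: "payoff E \<alpha> U X j = (\<Sum>i\<in>G. u (W i))"
    by (simp add: payoff_def G_def u_def W_def)
  have payD: "payoff E \<alpha> U (deviate X j s) j = (\<Sum>i\<in>G. u (W' i))"
    by (simp add: payoff_def G_def u_def W'_def)
  show "\<not> payoff E \<alpha> U (deviate X j s) j > payoff E \<alpha> U X j"
  proof (cases "G = {}")
    case True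
    then show ?thesis using payX payD by simp
  next
    case False
    have xsum: "(\<Sum>i\<in>G. X i j) = 1" using full jA False by (simp add: G_def)
    have dsum: "(\<Sum>i\<in>G. d i) \<le> 0"
      using xsum ssum by (simp add: d_def sum_subtractf)
    have "\<exists>i\<in>G. X i j > 0"
    proof (rule ccontr)
      assume "\<not> ?thesis"
      then have "\<forall>i\<in>G. X i j \<le> 0" by force
      then have "(\<Sum>i\<in>G. X i j) \<le> 0" by (simp add: sum_nonpos)
      then show False using xsum by simp
    qed
    then obtain i0 where i0G: "i0 \<in> G" and xi0: "X i0 j > 0" by blast
    define m where "m = W i0"
    have mle: "m \<le> W i" if "i \<in> G" for i
      using lev jA i0G xi0 that by (auto simp: m_def W_def G_def)
    have meq: "W i = m" if "i \<in> G" "d i < 0" for i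
    proof -
      have "X i j > 0" using that snn[OF that(1)] by (simp add: d_def)
      then have "W i \<le> m" using lev jA i0G that(1) by (auto simp: m_def W_def G_def)
      then show ?thesis using mle[OF that(1)] by simp
    qed
    define sl where "sl i = (u (W i + d i) - u (W i)) / d i" for i
    define R where "R = sl ` {i\<in>G. d i > 0}"
    define \<sigma> where "\<sigma> = Max (insert 0 R)"
    have finR: "finite R" unfolding R_def using finG by simp
    have sig0: "\<sigma> \<ge> 0" unfolding \<sigma>_def using finR by simp
    have key: "u (W' i) - u (W i) \<le> \<sigma> * d i" if iG: "i \<in> G" for i
    proof -
      have eq: "u (W' i) - u (W i) = sl i * d i" if "d i \<noteq> 0"
        using that W'eq[OF iG] by (simp add: sl_def)
      consider "d i = 0" | "d i > 0" | "d i < 0" by linarith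
      then show ?thesis
      proof cases
        case 1
        then show ?thesis using W'eq[OF iG] by simp
      next
        case 2
        have "sl i \<in> R" using 2 iG by (simp add: R_def)
        then have "sl i \<le> \<sigma>" unfolding \<sigma>_def using finR by simp
        then show ?thesis using eq 2 by (simp add: mult_right_mono)
      next
        case 3
        have Wi: "W i = m" using meq[OF iG 3] .
        have a0: "0 \<le> W i + d i" using W'nn[OF iG] W'eq[OF iG] by simp
        have sl_alt: "sl i = (u (W i) - u (W i + d i)) / (W i - (W i + d i))"
          unfolding sl_def using swap_div[of "u (W i + d i)" "u (W i)" "d i" 0] by simp
        have "\<sigma> \<le> sl i"
          unfolding \<sigma>_def
        proof (subst Max_le_iff)
          show "finite (insert 0 R)" using finR by simp
          show "insert 0 R \<noteq> {}" by simp
          show "\<forall>a\<in>insert 0 R. a \<le> sl i"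
          proof
            fix r assume "r \<in> insert 0 R"
            then consider "r = 0" | "r \<in> R" by blast
            then show "r \<le> sl i"
            proof cases
              case 1
              have "u (W i + d i) \<le> u (W i)" using umono a0 3 by simp
              then have "0 \<le> sl i" unfolding sl_def using 3
                by (simp add: divide_nonpos_neg)
              then show ?thesis using 1 by simp
            next
              case 2
              then obtain k where kG: "k \<in> G" and dk: "d k > 0" and r: "r = sl k"
                by (auto simp: R_def)
              have "(u (W k + d k) - u (W k)) / ((W k + d k) - W k)
                    \<le> (u (W i) - u (W i + d i)) / (W i - (W i + d i))"
                by (rule concave_chord[OF uconc a0]) (use 3 Wi mle[OF kG] dk in auto)
              then show ?thesis using r sl_alt by (simp add: sl_def)
            qed
          qed
        qed
        then show ?thesis using eq 3 by (simp add: mult_right_mono_neg)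
      qed
    qed
    have "(\<Sum>i\<in>G. u (W' i)) - (\<Sum>i\<in>G. u (W i)) = (\<Sum>i\<in>G. u (W' i) - u (W i))"
      by (simp add: sum_subtractf)
    also have "\<dots> \<le> (\<Sum>i\<in>G. \<sigma> * d i)" by (rule sum_mono) (use key in auto)
    also have "\<dots> = \<sigma> * (\<Sum>i\<in>G. d i)" by (simp add: sum_distrib_left)
    also have "\<dots> \<le> 0" using sig0 dsum by (simp add: mult_nonneg_nonpos)
    finally show ?thesis using payX payD by simp
  qed
qed

lemma sum_delta_fst:
  assumes "finite G"
  shows "(\<Sum>x\<in>G. if (x, k) = (a, b) then c else 0) = (if k = b \<and> a \<in> G then c else (0::real))"
  using assms by (cases "k = b") (simp_all add: sum.delta)

lemma sum_delta_snd:
  assumes "finite G"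
  shows "(\<Sum>x\<in>G. if (p, x) = (a, b) then c else 0) = (if p = a \<and> b \<in> G then c else (0::real))"
  using assms by (cases "p = a") (simp_all add: sum.delta)

lemma coord_cont [continuous_intros]: "continuous_on S (\<lambda>y. y e :: real)"
  by (rule continuous_on_subset[OF continuous_on_product_coordinates]) simp

theorem theorem4:
  fixes P :: "'p set" and A :: "'a set" and E :: "('p \<times> 'a) set"
    and \<alpha> :: "'p \<Rightarrow> real" and U :: "'a \<Rightarrow> real \<Rightarrow> real"
  assumes "ncgg P A E \<alpha> U"
    and "\<forall>j\<in>A. strict_mono_on {0..} (U j)"
    and "\<forall>j\<in>A. concave_on {0..} (U j)"
    and "\<forall>j\<in>A. \<forall>t\<ge>0. U j differentiable (at t within {0..})"
  shows "\<exists>x. pure_nash A E \<alpha> U x"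
proof -
  have finP: "finite P" and EPA: "E \<subseteq> P \<times> A" and alpha: "\<forall>i\<in>P. \<alpha> i \<ge> 0"
    and finA: "finite A"
    using assms(1) by (auto simp: ncgg_def)
  have fing: "finite (goods_of E j)" for j unfolding goods_of_def
    by (rule finite_subset[OF _ finP]) (use EPA in auto)
  have finag: "finite (agents_of E i)" for i
    unfolding agents_of_def
    by (rule finite_subset[OF _ finA]) (use EPA in auto)
  define K where "K e = (if e \<in> E then {0..1::real} else {0})" for e :: "'p \<times> 'a"
  define S1 where "S1 = PiE UNIV K"
  define A' where "A' = {j\<in>A. goods_of E j \<noteq> {}}"
  define S2 where "S2 = (\<Inter>j\<in>A'. {y::'p\<times>'a\<Rightarrow>real. (\<Sum>i\<in>goods_of E j. y (i,j)) = 1})"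
  define S where "S = S1 \<inter> S2"
  have cS1: "compact S1"
  proof -
    have "compactin (product_topology (\<lambda>_. euclidean) UNIV) (PiE UNIV K)"
      unfolding compactin_PiE by (auto simp: K_def)
    then show ?thesis by (simp add: S1_def euclidean_product_topology)
  qed
  have cS2: "closed S2" unfolding S2_def
    by (intro closed_INT ballI closed_Collect_eq continuous_intros)
  have cS: "compact S" unfolding S_def using cS1 cS2 by (rule compact_Int_closed)
  define c where "c j = (SOME i. i \<in> goods_of E j)" for j
  define y0 where "y0 e = (if e \<in> E \<and> fst e = c (snd e) then 1 else 0::real)" for e
  have y0S: "y0 \<in> S"
  proof -
    have "y0 \<in> S1" unfolding S1_def by (auto simp: PiE_iff K_def y0_def)
    moreover have "y0 \<in> S2"
      unfolding S2_def
    proof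
      fix j assume "j \<in> A'"
      then have ne: "goods_of E j \<noteq> {}" by (simp add: A'_def)
      then have cj: "c j \<in> goods_of E j" unfolding c_def by (simp add: some_in_eq)
      have "(\<Sum>i\<in>goods_of E j. y0 (i, j)) = (\<Sum>i\<in>goods_of E j. if i = c j then 1 else 0)"
        by (rule sum.cong) (auto simp: y0_def goods_of_def)
      also have "\<dots> = 1" using cj fing by (simp add: sum.delta')
      finally show "y0 \<in> {y. (\<Sum>i\<in>goods_of E j. y (i, j)) = 1}" by simp
    qed
    ultimately show ?thesis by (simp add: S_def)
  qed
  define F where "F y = (\<Sum>p\<in>P. (total_resource E \<alpha> (\<lambda>a b. y (a,b)) p)^2)" for y :: "'p\<times>'a\<Rightarrow>real"
  have contF: "continuous_on S F" unfolding F_def total_resource_def by (intro continuous_intros)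
  obtain ys where ysS: "ys \<in> S" and ysmin: "\<forall>y\<in>S. F ys \<le> F y"
    using continuous_attains_inf[OF cS _ contF] y0S by blast
  define X where "X = (\<lambda>i k. ys (i,k))"
  define W where "W = total_resource E \<alpha> X"
  have ysK: "ys e \<in> K e" for e using ysS unfolding S_def S1_def PiE_iff by blast
  have ysrow: "(\<Sum>i\<in>goods_of E j. ys (i,j)) = 1" if "j \<in> A" "goods_of E j \<noteq> {}" for j
    using ysS that by (auto simp: S_def S2_def A'_def)
  have prof: "is_profile A E X"
    unfolding is_profile_def is_strategy_def
  proof (intro ballI conjI)
    fix j i assume "j \<in> A" "i \<in> goods_of E j"
    then show "0 \<le> X i j" using ysK[of "(i,j)"] by (auto simp: X_def K_def goods_of_def)
  next
    fix j assume "j \<in> A"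
    then show "(\<Sum>i\<in>goods_of E j. X i j) \<le> 1"
      using ysrow[of j] by (cases "goods_of E j = {}") (auto simp: X_def)
  qed
  have full: "\<forall>j\<in>A. goods_of E j \<noteq> {} \<longrightarrow> (\<Sum>i\<in>goods_of E j. X i j) = 1"
    using ysrow by (simp add: X_def)
  have lev: "\<forall>j\<in>A. \<forall>i\<in>goods_of E j. \<forall>i'\<in>goods_of E j. X i j > 0 \<longrightarrow>
                total_resource E \<alpha> X i \<le> total_resource E \<alpha> X i'"
  proof (intro ballI impI, rule ccontr)
    fix j i i' assume jA: "j \<in> A" and iG: "i \<in> goods_of E j" and i'G: "i' \<in> goods_of E j"
      and pos: "X i j > 0" and nle: "\<not> total_resource E \<alpha> X i \<le> total_resource E \<alpha> X i'"
    have gt: "W i' < W i" using nle by (simp add: W_def)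
    then have ne: "i \<noteq> i'" by auto
    have iE: "(i,j) \<in> E" and i'E: "(i',j) \<in> E" using iG i'G by (auto simp: goods_of_def)
    have iP: "i \<in> P" and i'P: "i' \<in> P" using iE i'E EPA by auto
    define \<epsilon> where "\<epsilon> = min (X i j) ((W i - W i')/2)"
    have e0: "\<epsilon> > 0" using pos gt by (simp add: \<epsilon>_def)
    have e1: "\<epsilon> \<le> X i j" and e2: "\<epsilon> \<le> (W i - W i')/2" unfolding \<epsilon>_def by (rule min.cobounded1, rule min.cobounded2)
    define \<delta> where "\<delta> e = (if e = (i',j) then \<epsilon> else 0) - (if e = (i,j) then \<epsilon> else 0)" for e
    define y' where "y' e = ys e + \<delta> e" for e
    have two: "ys (i,j) + ys (i',j) \<le> 1"
    proof -
      have "(\<Sum>x\<in>{i,i'}. ys (x,j)) \<le> (\<Sum>x\<in>goods_of E j. ys (x,j))"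
      proof (rule sum_mono2[OF fing])
        show "{i, i'} \<subseteq> goods_of E j" using iG i'G by auto
        show "0 \<le> ys (b, j)" if "b \<in> goods_of E j - {i, i'}" for b
          using that ysK[of "(b,j)"] by (auto simp: K_def goods_of_def)
      qed
      moreover have "goods_of E j \<noteq> {}" using iG by auto
      ultimately show ?thesis using ysrow[OF jA] ne by simp
    qed
    have y'S: "y' \<in> S"
    proof -
      have "y' \<in> S1" unfolding S1_def PiE_iff
      proof (intro conjI ballI)
        fix e :: "'p \<times> 'a"
        show "y' e \<in> K e"
        proof (cases "e \<in> E")
          case True
          have yk: "ys e \<in> {0..1}" using ysK[of e] True by (simp add: K_def)
          have "0 \<le> y' e \<and> y' e \<le> 1"
          proof (cases "e = (i,j)")
            case True
            then show ?thesis using yk e1 e0 ne by (auto simp: y'_def \<delta>_def X_def)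
          next
            case False
            note F1 = False
            show ?thesis
            proof (cases "e = (i',j)")
              case True
              have "0 \<le> ys (i,j)" using ysK[of "(i,j)"] iE by (simp add: K_def)
              then show ?thesis using True yk e1 e0 two by (auto simp: y'_def \<delta>_def X_def)
            next
              case False
              then show ?thesis using F1 yk by (simp add: y'_def \<delta>_def)
            qed
          qed
          then show ?thesis using True by (simp add: K_def)
        next
          case False
          then have "e \<noteq> (i,j)" "e \<noteq> (i',j)" using iE i'E by auto
          then show ?thesis using False ysK[of e] by (simp add: K_def y'_def \<delta>_def)
        qed
      qed simp
      moreover have "y' \<in> S2" unfolding S2_def
      proof
        fix k assume kA': "k \<in> A'"
        have "(\<Sum>x\<in>goods_of E k. y' (x, k)) = (\<Sum>x\<in>goods_of E k. ys (x, k)) + (\<Sum>x\<in>goods_of E k. \<delta> (x, k))"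
          by (simp add: y'_def sum.distrib)
        also have "(\<Sum>x\<in>goods_of E k. \<delta> (x, k)) = 0"
          unfolding \<delta>_def sum_subtractf sum_delta_fst[OF fing] using iG i'G by auto
        finally show "y' \<in> {y. (\<Sum>x\<in>goods_of E k. y (x, k)) = 1}"
          using ysS kA' by (auto simp: S_def S2_def)
      qed
      ultimately show ?thesis by (simp add: S_def)
    qed
    define \<Delta> where "\<Delta> p = (if p = i' then \<epsilon> else 0) - (if p = i then \<epsilon> else 0)" for p
    have T': "total_resource E \<alpha> (\<lambda>a b. y' (a,b)) p = W p + \<Delta> p" for p
    proof -
      have "(\<Sum>k\<in>agents_of E p. \<delta> (p, k)) = \<Delta> p"
        unfolding \<delta>_def \<Delta>_def sum_subtractf sum_delta_snd[OF finag] using iE i'E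
        by (auto simp: agents_of_def)
      then show ?thesis
        by (simp add: total_resource_def W_def X_def y'_def sum.distrib)
    qed
    have pt: "(W p + \<Delta> p)^2 - (W p)^2 = (if p = i' then 2 * W i' * \<epsilon> + \<epsilon>^2 else 0)
              + (if p = i then \<epsilon>^2 - 2 * W i * \<epsilon> else 0)" for p
      using ne by (auto simp: \<Delta>_def power2_eq_square algebra_simps)
    have Fys: "F ys = (\<Sum>p\<in>P. (W p)^2)" unfolding F_def W_def X_def by (rule refl)
    have "F y' - F ys = (\<Sum>p\<in>P. (W p + \<Delta> p)^2 - (W p)^2)"
    proof -
      have "F y' = (\<Sum>p\<in>P. (W p + \<Delta> p)^2)" unfolding F_def T' by (rule refl)
      then show ?thesis using Fys by (simp add: sum_subtractf)
    qed
    also have "\<dots> = (2 * W i' * \<epsilon> + \<epsilon>^2) + (\<epsilon>^2 - 2 * W i * \<epsilon>)"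
      unfolding pt sum.distrib using finP iP i'P by (simp add: sum.delta')
    finally have diff: "F y' - F ys = 2 * \<epsilon>^2 - 2 * \<epsilon> * (W i - W i')" by (simp add: algebra_simps)
    have "2 * \<epsilon> * \<epsilon> \<le> \<epsilon> * (W i - W i')"
      using mult_left_mono[of "2 * \<epsilon>" "W i - W i'" \<epsilon>] e2 e0 by (simp add: algebra_simps)
    then have "F y' - F ys \<le> - \<epsilon> * (W i - W i')" using diff by (simp add: power2_eq_square algebra_simps)
    also have "\<dots> < 0" using e0 gt by (simp add: mult_pos_pos)
    finally have "F y' < F ys" by simp
    then show False using ysmin y'S by force
  qed
  have "pure_nash A E \<alpha> U X"
    by (rule nash_suff[OF assms(1) assms(2) assms(3) prof full lev])
  then show ?thesis by blast
qed

end
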